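(* Let $f:\mathbb{R}^n_{>0}\to\mathbb{R}^n_{>0}$ be order-preserving and homogeneous, and let $J\subset[n]$ be a nonempty proper subset such that $r(f^J_0)<\lambda(f^{[n]\setminus J}_\infty)$. If $f^J_0$ has a nonempty and $d_H$-bounded set of eigenvectors in $\mathbb{R}^J_{>0}$, then $r(f^I_0)<\lambda(f^{[n]\setminus I}_\infty)$ for all nonempty $I\subseteq J$. If $f^{[n]\setminus J}_\infty$ has a nonempty and $d_H$-bounded set of eigenvectors in the part $(0,\infty]^{[n]\setminus J}$, then $r(f^I_0)<\lambda(f^{[n]\setminus I}_\infty)$ for all $I\supseteq J$ with $I\ne[n]$.
   Context: $[n]=\{1,\dots,n\}$; $x\le y$ is the entrywise order. Order-preserving: $x\le y\Rightarrow f(x)\le f(y)$; homogeneous: $f(tx)=tf(x)$ for $t>0$. Every order-preserving homogeneous $f:\mathbb{R}^n_{>0}\to\mathbb{R}^n_{>0}$ extends continuously to order-preserving homogeneous maps $\mathbb{R}^n_{\ge0}\to\mathbb{R}^n_{\ge0}$ and $(0,\infty]^n\to(0,\infty]^n$, again denoted $f$. For $\alpha\in[-\infty,\infty]$ and $J\subseteq[n]$, $P^J_\alpha(x)_j=x_j$ for $j\in J$ and $=\alpha$ otherwise; $f^J_0=P^J_0fP^J_0$ on $\mathbb{R}^n_{\ge0}$ and $f^J_\infty=P^J_\infty fP^J_\infty$ on $(0,\infty]^n$. For $g$ order-preserving homogeneous on $\mathbb{R}^n_{\ge0}$ or $(0,\infty]^n$: $r(g)=\inf_{x\in\mathbb{R}^n_{>0}}\max_i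 g(x)_i/x_i$, $\lambda(g)=\sup_{x\in\mathbb{R}^n_{>0}}\min_i g(x)_i/x_i$ (values in $[0,\infty]$). $\mathbb{R}^J_{>0}=\{x\in\mathbb{R}^n_{\ge0}:\{i:x_i>0\}=J\}$ and $(0,\infty]^{K}=\{x\in(0,\infty]^n:\{i:x_i<\infty\}=K\}$. An eigenvector of $g$ in one of these sets $S$ is $x\in S$ with $g(x)=\mu x$ for some $\mu$. Hilbert's projective metric between two vectors $x,y$ in the same such set, with $L$ the set of coordinates where they are positive and finite, is $d_H(x,y)=\log\max_{i,j\in L}\frac{y_ix_j}{x_iy_j}$; $d_H$-bounded means finite $d_H$-diameter. *)

theory Defs
  imports "HOL-Analysis.Analysis" "HOL-Library.Extended_Real"
begin

definition pos_vec :: "('n \<Rightarrow> real) \<Rightarrow> bool" where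
  "pos_vec x \<longleftrightarrow> (\<forall>i. x i > 0)"

definition nonneg_vec :: "('n \<Rightarrow> real) \<Rightarrow> bool" where
  "nonneg_vec x \<longleftrightarrow> (\<forall>i. x i \<ge> 0)"

definition order_preserving_pos :: "(('n \<Rightarrow> real) \<Rightarrow> ('n \<Rightarrow> real)) \<Rightarrow> bool" where
  "order_preserving_pos f \<longleftrightarrow>
     (\<forall>x y. pos_vec x \<longrightarrow> pos_vec y \<longrightarrow> x \<le> y \<longrightarrow> f x \<le> f y)"

definition homogeneous_pos :: "(('n \<Rightarrow> real) \<Rightarrow> ('n \<Rightarrow> real)) \<Rightarrow> bool" where
  "homogeneous_pos f \<longleftrightarrow>
     (\<forall>x t. pos_vec x \<longrightarrow> t > 0 \<longrightarrow> f (\<lambda>i. t * x i) = (\<lambda>i. t * f x i))"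

text \<open>Continuous extension to the closed cone R^n_{\<ge>0}: f(x) = lim_{\<epsilon>\<down>0} f(x + \<epsilon>1)
  (the limit is a monotone infimum).\<close>
definition ext0 :: "(('n \<Rightarrow> real) \<Rightarrow> ('n \<Rightarrow> real)) \<Rightarrow> ('n \<Rightarrow> real) \<Rightarrow> ('n \<Rightarrow> real)" where
  "ext0 f x = (\<lambda>i. INF e\<in>{0<..}. f (\<lambda>j. x j + e) i)"

text \<open>Continuous extension to (0,\<infinity>]^n: f(x) = sup of f(y) over finite positive y \<le> x.\<close>
definition extinf :: "(('n \<Rightarrow> real) \<Rightarrow> ('n \<Rightarrow> real)) \<Rightarrow> ('n \<Rightarrow> ereal) \<Rightarrow> ('n \<Rightarrow> ereal)" where
  "extinf f x = (\<lambda>i. SUP y\<in>{y. pos_vec y \<and> (\<forall>j. ereal (y j) \<le> x j)}. ereal (f y i))"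

definition P0 :: "'n set \<Rightarrow> ('n \<Rightarrow> real) \<Rightarrow> ('n \<Rightarrow> real)" where
  "P0 J x = (\<lambda>i. if i \<in> J then x i else 0)"

definition Pinf :: "'n set \<Rightarrow> ('n \<Rightarrow> ereal) \<Rightarrow> ('n \<Rightarrow> ereal)" where
  "Pinf J x = (\<lambda>i. if i \<in> J then x i else \<infinity>)"

definition face0 :: "(('n \<Rightarrow> real) \<Rightarrow> ('n \<Rightarrow> real)) \<Rightarrow> 'n set \<Rightarrow> ('n \<Rightarrow> real) \<Rightarrow> ('n \<Rightarrow> real)" where
  "face0 f J = P0 J \<circ> ext0 f \<circ> P0 J"

definition faceinf :: "(('n \<Rightarrow> real) \<Rightarrow> ('n \<Rightarrow> real)) \<Rightarrow> 'n set \<Rightarrow> ('n \<Rightarrow> ereal) \<Rightarrow> ('n \<Rightarrow> ereal)" where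
  "faceinf f J = Pinf J \<circ> extinf f \<circ> Pinf J"

definition r0 :: "(('n::finite \<Rightarrow> real) \<Rightarrow> ('n \<Rightarrow> real)) \<Rightarrow> ereal" where
  "r0 g = (INF x\<in>{x. pos_vec x}. ereal (MAX i. g x i / x i))"

definition lambda0 :: "(('n::finite \<Rightarrow> real) \<Rightarrow> ('n \<Rightarrow> real)) \<Rightarrow> ereal" where
  "lambda0 g = (SUP x\<in>{x. pos_vec x}. ereal (MIN i. g x i / x i))"

definition rinf :: "(('n::finite \<Rightarrow> ereal) \<Rightarrow> ('n \<Rightarrow> ereal)) \<Rightarrow> ereal" where
  "rinf g = (INF x\<in>{x. pos_vec x}. (MAX i. g (\<lambda>j. ereal (x j)) i / ereal (x i)))"

definition lambdainf :: "(('n::finite \<Rightarrow> ereal) \<Rightarrow> ('n \<Rightarrow> ereal)) \<Rightarrow> ereal" where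
  "lambdainf g = (SUP x\<in>{x. pos_vec x}. (MIN i. g (\<lambda>j. ereal (x j)) i / ereal (x i)))"

definition part0 :: "'n set \<Rightarrow> ('n \<Rightarrow> real) set" where
  "part0 J = {x. nonneg_vec x \<and> {i. x i > 0} = J}"

definition partinf :: "'n set \<Rightarrow> ('n \<Rightarrow> ereal) set" where
  "partinf K = {x. (\<forall>i. x i > 0) \<and> {i. x i < \<infinity>} = K}"

definition eigvecs0 :: "(('n \<Rightarrow> real) \<Rightarrow> ('n \<Rightarrow> real)) \<Rightarrow> 'n set \<Rightarrow> ('n \<Rightarrow> real) set" where
  "eigvecs0 g J = {x \<in> part0 J. \<exists>\<mu>::real. g x = (\<lambda>i. \<mu> * x i)}"

definition eigvecsinf :: "(('n \<Rightarrow> ereal) \<Rightarrow> ('n \<Rightarrow> ereal)) \<Rightarrow> 'n set \<Rightarrow> ('n \<Rightarrow> ereal) set" where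
  "eigvecsinf g K = {x \<in> partinf K. \<exists>\<mu>::real. g x = (\<lambda>i. ereal \<mu> * x i)}"

definition hilbert :: "'n set \<Rightarrow> ('n \<Rightarrow> real) \<Rightarrow> ('n \<Rightarrow> real) \<Rightarrow> real" where
  "hilbert L x y = ln (Max {(y i * x j) / (x i * y j) | i j. i \<in> L \<and> j \<in> L})"

definition dH_bounded0 :: "'n set \<Rightarrow> ('n \<Rightarrow> real) set \<Rightarrow> bool" where
  "dH_bounded0 J E \<longleftrightarrow> (\<exists>C. \<forall>x\<in>E. \<forall>y\<in>E. hilbert J x y \<le> C)"

definition dH_boundedinf :: "'n set \<Rightarrow> ('n \<Rightarrow> ereal) set \<Rightarrow> bool" where
  "dH_boundedinf K E \<longleftrightarrow>
     (\<exists>C. \<forall>x\<in>E. \<forall>y\<in>E. hilbert K (\<lambda>i. real_of_ereal (x i)) (\<lambda>i. real_of_ereal (y i)) \<le> C)"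

end

theory Submission
  imports Defs
begin


definition omg :: "'n::finite set \<Rightarrow> real^'n \<Rightarrow> real" where
  "omg L x = Max ((\<lambda>(i,j). x$i - x$j) ` (L \<times> L))"

lemma omg_ge: "i \<in> L \<Longrightarrow> j \<in> L \<Longrightarrow> x$i - x$j \<le> omg L x"
  unfolding omg_def by (rule Max_ge) force+

lemma omg_le_iff: "L \<noteq> {} \<Longrightarrow> omg L x \<le> R \<longleftrightarrow> (\<forall>i\<in>L. \<forall>j\<in>L. x$i - x$j \<le> R)"
  unfolding omg_def by (subst Max_le_iff) auto

lemma omg_le: "L \<noteq> {} \<Longrightarrow> (\<And>i j. i\<in>L \<Longrightarrow> j\<in>L \<Longrightarrow> x$i - x$j \<le> R) \<Longrightarrow> omg L x \<le> R"
  using omg_le_iff by blast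

lemma omg_attained: "L \<noteq> {} \<Longrightarrow> \<exists>i\<in>L. \<exists>j\<in>L. omg L x = x$i - x$j"
proof -
  assume "L \<noteq> {}"
  hence "omg L x \<in> (\<lambda>(i,j). x$i - x$j) ` (L \<times> L)" unfolding omg_def by (intro Max_in) auto
  thus ?thesis by auto
qed

lemma omg_nonneg: "L \<noteq> {} \<Longrightarrow> 0 \<le> omg L x"
  using omg_ge[of _ L _ x] by fastforce

lemma omg_triangle: "L \<noteq> {} \<Longrightarrow> omg L (x + y) \<le> omg L x + omg L y"
  apply (rule omg_le, simp)
  using omg_ge[of _ L _ x] omg_ge[of _ L _ y] by fastforce

lemma omg_scale: "L \<noteq> {} \<Longrightarrow> 0 \<le> c \<Longrightarrow> omg L (c *\<^sub>R x) = c * omg L x"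
proof -
  assume L: "L \<noteq> {}" and c: "0 \<le> c"
  obtain i j where ij: "i\<in>L" "j\<in>L" "omg L x = x$i - x$j" using omg_attained[OF L] by blast
  obtain p q where pq: "p\<in>L" "q\<in>L" "omg L (c *\<^sub>R x) = c * x$p - c* x$q" using omg_attained[OF L, of "c *\<^sub>R x"] by auto
  have "c * x$p - c* x$q = c * (x$p - x$q)" by algebra
  also have "\<dots> \<le> c * omg L x" using omg_ge[OF pq(1,2), of x] c by (simp add: mult_left_mono)
  finally have 1: "omg L (c *\<^sub>R x) \<le> c * omg L x" using pq by simp
  have "c * omg L x = c * x$i - c * x$j" by (simp add: ij(3) right_diff_distrib)
  also have "\<dots> \<le> omg L (c *\<^sub>R x)" using omg_ge[OF ij(1,2), of "c *\<^sub>R x"] by simp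
  finally show ?thesis using 1 by simp
qed

lemma omg_uminus: "omg L (- x) = omg L x"
proof (cases "L = {}")
  case True thus ?thesis by (simp add: omg_def)
next
  case False
  show ?thesis
    apply (rule antisym)
    subgoal apply (rule omg_le[OF False]) using omg_ge[of _ L _ x] by fastforce
    subgoal apply (rule omg_le[OF False]) using omg_ge[of _ L _ "-x"] by fastforce
    done
qed

lemma omg_minus_commute: "omg L (x - y) = omg L (y - x)"
  using omg_uminus[of L "x - y"] by simp

lemma omg_lip: "L \<noteq> {} \<Longrightarrow> omg L x \<le> omg L y + 2 * norm (x - y)"
proof (rule omg_le)
  fix i j assume L: "L \<noteq> {}" and ij: "i \<in> L" "j \<in> L"
  have "\<bar>(x - y)$i\<bar> \<le> norm (x - y)" "\<bar>(x - y)$j\<bar> \<le> norm (x - y)" by (rule component_le_norm_cart)+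
  moreover have "y$i - y$j \<le> omg L y" by (rule omg_ge[OF ij])
  ultimately show "x$i - x$j \<le> omg L y + 2 * norm (x - y)" by simp
qed

lemma omg_cont: "continuous_on S (omg L)"
proof (cases "L = {}")
  case True thus ?thesis by (simp add: omg_def continuous_on_const)
next
  case False
  have "2-lipschitz_on S (omg L)"
  proof (rule lipschitz_onI)
    fix x y assume "x \<in> S" "y \<in> S"
    have "omg L x \<le> omg L y + 2 * norm (x - y)" "omg L y \<le> omg L x + 2 * norm (y - x)"
      using omg_lip[OF False] by blast+
    thus "dist (omg L x) (omg L y) \<le> 2 * dist x y"
      by (simp add: dist_real_def dist_norm norm_minus_commute abs_le_iff)
  qed simp
  thus ?thesis by (rule lipschitz_on_continuous_on)
qed


locale pf =
  fixes h :: "('n::finite \<Rightarrow> real) \<Rightarrow> ('n \<Rightarrow> real)" and L :: "'n set" and j0 :: 'n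
    and v :: "'n \<Rightarrow> real" and \<mu> C :: real and I0 :: "'n set"
  assumes j0: "j0 \<in> L"
  and hmono: "\<And>x y i. pos_vec x \<Longrightarrow> pos_vec y \<Longrightarrow> (\<forall>k\<in>L. x k \<le> y k) \<Longrightarrow> i \<in> L \<Longrightarrow> h x i \<le> h y i"
  and hhom: "\<And>x t i. pos_vec x \<Longrightarrow> t > 0 \<Longrightarrow> i \<in> L \<Longrightarrow> h (\<lambda>j. t * x j) i = t * h x i"
  and hpos: "\<And>x i. pos_vec x \<Longrightarrow> i \<in> L \<Longrightarrow> h x i > 0"
  and vpos: "pos_vec v" and veig: "\<And>i. i \<in> L \<Longrightarrow> h v i = \<mu> * v i"
  and bnd: "\<And>x y \<nu>x \<nu>y. pos_vec x \<Longrightarrow> pos_vec y \<Longrightarrow> (\<forall>i\<in>L. h x i = \<nu>x * x i)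
              \<Longrightarrow> (\<forall>i\<in>L. h y i = \<nu>y * y i) \<Longrightarrow> hilbert L x y \<le> C"
begin

lemma Lne: "L \<noteq> {}" using j0 by auto

definition "E u = (\<lambda>i. exp (u$i))"
definition "lh u i = ln (h (E u) i)"
definition "D \<delta> i = (if i \<in> I0 then 1 + \<delta> else 1 - (\<delta>::real))"
definition "N \<delta> u = (\<chi> i. if i \<in> L then (ln (D \<delta> i) + lh u i) - (ln (D \<delta> j0) + lh u j0) else 0)"
definition "V = {u. u$j0 = 0 \<and> (\<forall>i. i \<notin> L \<longrightarrow> u$i = 0)}"
definition "u0 = (\<chi> i. if i \<in> L then ln (v i) - ln (v j0) else 0)"
definition "cvec \<delta> = (\<chi> i. if i \<in> L then ln (D \<delta> i) - ln (D \<delta> j0) else 0)"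

lemma E_pos: "pos_vec (E u)" by (simp add: E_def pos_vec_def)

lemma h_local: "pos_vec x \<Longrightarrow> pos_vec y \<Longrightarrow> (\<forall>k\<in>L. x k = y k) \<Longrightarrow> i \<in> L \<Longrightarrow> h x i = h y i"
  using hmono[of x y i] hmono[of y x i] by fastforce

lemma lh_shift:
  assumes "\<forall>k\<in>L. u'$k \<le> u$k + c" "i \<in> L"
  shows "lh u' i \<le> lh u i + c"
proof -
  have p: "pos_vec (\<lambda>j. exp c * E u j)" using E_pos[of u] by (simp add: pos_vec_def)
  have "\<forall>k\<in>L. E u' k \<le> exp c * E u k" using assms(1) by (simp add: E_def add.commute flip: exp_add)
  hence "h (E u') i \<le> h (\<lambda>j. exp c * E u j) i" using hmono[OF E_pos p _ assms(2)] by blast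
  also have "\<dots> = exp c * h (E u) i" using hhom[OF E_pos _ assms(2)] by simp
  finally have "ln (h (E u') i) \<le> ln (exp c * h (E u) i)"
    using hpos[OF E_pos assms(2)] by simp
  also have "\<dots> = c + ln (h (E u) i)" using hpos[OF E_pos[of u] assms(2)] by (simp add: ln_mult)
  finally show ?thesis by (simp add: lh_def)
qed

lemma lh_lip: "i \<in> L \<Longrightarrow> \<bar>lh u i - lh u' i\<bar> \<le> norm (u - u')"
proof -
  assume i: "i \<in> L"
  have c: "u$k - u'$k \<le> norm (u - u') \<and> u'$k - u$k \<le> norm (u - u')" for k
    using component_le_norm_cart[of "u - u'" k] by (simp add: abs_le_iff)
  have "\<forall>k\<in>L. u$k \<le> u'$k + norm (u - u')" "\<forall>k\<in>L. u'$k \<le> u$k + norm (u - u')"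
    using c by (metis add.commute diff_le_eq)+
  from lh_shift[OF this(1) i] lh_shift[OF this(2) i] show ?thesis by simp
qed

lemma N_comp_lip: "\<bar>N \<delta> u $ i - N \<delta> u' $ i\<bar> \<le> 2 * norm (u - u')"
  using lh_lip[OF j0, of u u'] lh_lip[of i u u'] by (auto simp: N_def)

lemma N_cont: "continuous_on S (N \<delta>)"
proof -
  have "(2 * real CARD('n))-lipschitz_on S (N \<delta>)"
  proof (rule lipschitz_onI)
    fix u u' assume "u \<in> S" "u' \<in> S"
    have "dist (N \<delta> u) (N \<delta> u') = norm (N \<delta> u - N \<delta> u')" by (simp add: dist_norm)
    also have "\<dots> \<le> (\<Sum>i\<in>UNIV. \<bar>(N \<delta> u - N \<delta> u') $ i\<bar>)" by (rule norm_le_l1_cart)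
    also have "\<dots> \<le> of_nat (card (UNIV::'n set)) * (2 * norm (u - u'))"
      by (rule sum_bounded_above) (use N_comp_lip in simp)
    finally show "dist (N \<delta> u) (N \<delta> u') \<le> 2 * real CARD('n) * dist u u'" by (simp add: dist_norm)
  qed simp
  thus ?thesis by (rule lipschitz_on_continuous_on)
qed

lemma N_V: "N \<delta> u \<in> V" by (simp add: N_def V_def j0)
lemma u0_V: "u0 \<in> V" by (simp add: u0_def V_def j0)

lemma N_shift: "N \<delta> u = N 0 u + cvec \<delta>"
  by (simp add: vec_eq_iff N_def cvec_def D_def)

lemma omg_cvec: "0 \<le> \<delta> \<Longrightarrow> \<delta> < 1 \<Longrightarrow> omg L (cvec \<delta>) \<le> ln (1 + \<delta>) - ln (1 - \<delta>)"
proof (rule omg_le[OF Lne])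
  fix i j assume d: "0 \<le> \<delta>" "\<delta> < 1" and ij: "i \<in> L" "j \<in> L"
  have "ln (1 - \<delta>) \<le> ln (1 + \<delta>)" using d by simp
  thus "cvec \<delta> $ i - cvec \<delta> $ j \<le> ln (1 + \<delta>) - ln (1 - \<delta>)"
    using ij by (auto simp: cvec_def D_def)
qed

lemma N0_nonexp: "omg L (N 0 u - N 0 u') \<le> omg L (u - u')"
proof (rule omg_le[OF Lne])
  fix i j assume ij: "i \<in> L" "j \<in> L"
  define a where "a = Max ((\<lambda>k. (u - u')$k) ` L)"
  define b where "b = Min ((\<lambda>k. (u - u')$k) ` L)"
  have ak: "\<forall>k\<in>L. (u - u')$k \<le> a" unfolding a_def by (auto intro: Max_ge)
  have bk: "\<forall>k\<in>L. b \<le> (u - u')$k" unfolding b_def by (auto intro: Min_le)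
  have "a \<in> (\<lambda>k. (u - u')$k) ` L" unfolding a_def using Lne by (intro Max_in) auto
  then obtain p where p: "p \<in> L" "a = (u - u')$p" by auto
  have "b \<in> (\<lambda>k. (u - u')$k) ` L" unfolding b_def using Lne by (intro Min_in) auto
  then obtain q where q: "q \<in> L" "b = (u - u')$q" by auto
  have 1: "lh u i \<le> lh u' i + a" by (rule lh_shift[OF _ ij(1)]) (use ak in auto)
  have 2: "lh u' j \<le> lh u j + (- b)" by (rule lh_shift[OF _ ij(2)]) (use bk in auto)
  have "a - b \<le> omg L (u - u')" using p q omg_ge[OF p(1) q(1), of "u - u'"] by simp
  thus "(N 0 u - N 0 u') $ i - (N 0 u - N 0 u') $ j \<le> omg L (u - u')"
    using 1 2 ij by (simp add: N_def D_def)
qed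

lemma mu_pos: "\<mu> > 0"
proof -
  have "v j0 > 0" using vpos by (simp add: pos_vec_def)
  moreover have "0 < \<mu> * v j0" using hpos[OF vpos j0] veig[OF j0] by simp
  ultimately show ?thesis using zero_less_mult_pos2 by blast
qed

lemma N0_u0: "N 0 u0 = u0"
proof -
  have vj0: "v j0 > 0" using vpos by (simp add: pos_vec_def)
  have pv: "pos_vec (\<lambda>j. (1 / v j0) * v j)" using vpos vj0 by (simp add: pos_vec_def)
  have hk: "h (E u0) k = (1 / v j0) * (\<mu> * v k)" if k: "k \<in> L" for k
  proof -
    have "h (E u0) k = h (\<lambda>j. (1 / v j0) * v j) k"
      by (rule h_local[OF E_pos pv _ k]) (use vpos in \<open>auto simp: E_def u0_def pos_vec_def exp_diff\<close>)
    also have "\<dots> = (1 / v j0) * h v k" by (rule hhom[OF vpos _ k]) (use vj0 in simp)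
    finally show ?thesis using veig[OF k] by simp
  qed
  have "lh u0 k = ln \<mu> + ln (v k) - ln (v j0)" if k: "k \<in> L" for k
  proof -
    have vk: "v k > 0" using vpos by (simp add: pos_vec_def)
    have "lh u0 k = ln ((\<mu> * v k) / v j0)" using hk[OF k] by (simp add: lh_def)
    also have "\<dots> = ln \<mu> + ln (v k) - ln (v j0)" using mu_pos vk vj0 by (simp add: ln_mult ln_div)
    finally show ?thesis .
  qed
  thus ?thesis using j0 by (simp add: vec_eq_iff N_def D_def u0_def)
qed


lemma fix_eig:
  assumes "N \<delta> u = u" "\<delta> < 1" "i \<in> L" "0 \<le> \<delta>"
  shows "D \<delta> i * h (E u) i = (D \<delta> j0 * h (E u) j0) * E u i"
proof -
  have Dp: "D \<delta> k > 0" for k using assms(2,4) by (simp add: D_def)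
  have hp: "h (E u) k > 0" if "k \<in> L" for k using hpos[OF E_pos that] .
  have "u $ i = (ln (D \<delta> i) + lh u i) - (ln (D \<delta> j0) + lh u j0)"
    using arg_cong[OF assms(1), of "\<lambda>w. w $ i"] assms(3) by (simp add: N_def)
  also have "\<dots> = ln ((D \<delta> i * h (E u) i) / (D \<delta> j0 * h (E u) j0))"
    using Dp[of i] Dp[of j0] hp[OF assms(3)] hp[OF j0] by (simp add: lh_def ln_mult ln_div)
  finally have "exp (u $ i) = (D \<delta> i * h (E u) i) / (D \<delta> j0 * h (E u) j0)"
    using Dp[of i] Dp[of j0] hp[OF assms(3)] hp[OF j0] by simp
  thus ?thesis using Dp[of j0] hp[OF j0] by (simp add: E_def field_simps)
qed

lemma hilbert_ge:
  assumes "pos_vec x" "pos_vec y" "i \<in> L" "j \<in> L"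
  shows "ln ((y i * x j) / (x i * y j)) \<le> hilbert L x y"
proof -
  let ?S = "{(y i * x j) / (x i * y j) | i j. i \<in> L \<and> j \<in> L}"
  have S: "?S = (\<lambda>(i,j). (y i * x j) / (x i * y j)) ` (L \<times> L)" by auto
  have "finite ?S" unfolding S by simp
  hence "(y i * x j) / (x i * y j) \<le> Max ?S" using assms(3,4) by (intro Max_ge) auto
  moreover have "(y i * x j) / (x i * y j) > 0" using assms(1,2) by (simp add: pos_vec_def)
  ultimately show ?thesis unfolding hilbert_def by simp
qed

lemma fix0_bound:
  assumes "u \<in> V" "N 0 u = u"
  shows "omg L (u - u0) \<le> C"
proof (rule omg_le[OF Lne])
  fix i j assume ij: "i \<in> L" "j \<in> L"
  have D0: "D 0 k = 1" for k by (simp add: D_def)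
  have "D 0 k * h (E u) k = (D 0 j0 * h (E u) j0) * E u k" if "k \<in> L" for k
    using fix_eig[OF assms(2) _ that] by simp
  hence eu: "\<forall>k\<in>L. h (E u) k = h (E u) j0 * E u k" unfolding D0 by simp
  have hb: "hilbert L (E u) v \<le> C"
    by (rule bnd[OF E_pos vpos eu]) (use veig in auto)
  have vi: "v i > 0" "v j > 0" using vpos by (auto simp: pos_vec_def)
  have "ln ((v j * E u i) / (E u j * v i)) \<le> C"
    using hilbert_ge[OF E_pos vpos ij(2,1), of u] hb by linarith
  moreover have "ln ((v j * E u i) / (E u j * v i)) = ln (v j) + u$i - u$j - ln (v i)"
    using vi by (simp add: E_def ln_mult ln_div)
  ultimately show "(u - u0) $ i - (u - u0) $ j \<le> C" using ij by (simp add: u0_def)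
qed


lemma eps_bound: "0 \<le> d \<Longrightarrow> d \<le> 1/2 \<Longrightarrow> ln (1 + d) - ln (1 - d) \<le> 3 * (d::real)"
proof -
  assume that: "0 \<le> d" "d \<le> 1/2"
  have 1: "ln (1 + d) \<le> d" using that by (intro ln_add_one_self_le_self) 
  have "ln (1 / (1 - d)) \<le> 1 / (1 - d) - 1" using that by (intro ln_le_minus_one) simp
  also have "\<dots> = d / (1 - d)" using that by (simp add: field_simps)
  also have "\<dots> \<le> 2 * d" using that by (simp add: field_simps mult_left_le)
  finally have "- ln (1 - d) \<le> 2 * d" using that by (simp add: ln_div)
  thus ?thesis using 1 by simp
qed

lemma omg_cont_comp[continuous_intros]: "continuous_on S F \<Longrightarrow> continuous_on S (\<lambda>x. omg L (F x))"
  by (rule continuous_on_compose2[OF omg_cont[of UNIV L]]) auto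

lemma N_cont_comp[continuous_intros]: "continuous_on S F \<Longrightarrow> continuous_on S (\<lambda>x. N \<delta> (F x))"
  by (rule continuous_on_compose2[OF N_cont[of UNIV \<delta>]]) auto

lemma main_perturb: "\<exists>\<delta>>0. \<delta> < 1 \<and> (\<exists>w \<nu>. pos_vec w \<and> (\<forall>i\<in>L. D \<delta> i * h w i = \<nu> * w i))"
proof -
  define R where "R = max C 0 + 1"
  have R: "R > 0" "C < R" by (auto simp: R_def)
  define B where "B = {u. u $ j0 = 0 \<and> (\<forall>i. i \<notin> L \<longrightarrow> u $ i = 0) \<and> omg L (u - u0) \<le> R}"
  define Sph where "Sph = B \<inter> {u. omg L (u - u0) = R}"
  have BV: "u \<in> V" if "u \<in> B" for u using that by (simp add: B_def V_def)
  have closedB: "closed B" unfolding B_def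
    by (intro closed_Collect_conj closed_Collect_all closed_Collect_imp closed_Collect_eq closed_Collect_le)
       (auto intro!: continuous_intros)
  have compB: "compact B"
  proof -
    have "norm u \<le> (\<Sum>i\<in>UNIV. R + \<bar>u0 $ i\<bar>)" if u: "u \<in> B" for u
    proof -
      have "\<bar>u $ i\<bar> \<le> R + \<bar>u0 $ i\<bar>" for i
      proof (cases "i \<in> L")
        case True
        have om: "omg L (u - u0) \<le> R" using u by (simp add: B_def)
        have "(u - u0) $ i - (u - u0) $ j0 \<le> R" "(u - u0) $ j0 - (u - u0) $ i \<le> R"
          using omg_ge[OF True j0, of "u - u0"] omg_ge[OF j0 True, of "u - u0"] om by auto
        moreover have "u $ j0 = 0" "u0 $ j0 = 0" using u u0_V by (auto simp: B_def V_def)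
        ultimately show ?thesis by simp
      next
        case False thus ?thesis using u R by (simp add: B_def)
      qed
      hence "(\<Sum>i\<in>UNIV. \<bar>u $ i\<bar>) \<le> (\<Sum>i\<in>UNIV. R + \<bar>u0 $ i\<bar>)" by (intro sum_mono) auto
      thus ?thesis using norm_le_l1_cart[of u] by linarith
    qed
    hence "bounded B" unfolding bounded_iff by blast
    thus ?thesis using closedB by (simp add: compact_eq_bounded_closed)
  qed
  have convB: "convex B" unfolding convex_def
  proof (intro ballI allI impI)
    fix x y and a b :: real assume xy: "x \<in> B" "y \<in> B" and ab: "0 \<le> a" "0 \<le> b" "a + b = 1"
    have eq: "a *\<^sub>R x + b *\<^sub>R y - u0 = a *\<^sub>R (x - u0) + b *\<^sub>R (y - u0)"
      using ab by (simp add: algebra_simps flip: scaleR_add_left)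
    have "omg L (a *\<^sub>R x + b *\<^sub>R y - u0) \<le> a * omg L (x - u0) + b * omg L (y - u0)"
      unfolding eq using omg_triangle[OF Lne] omg_scale[OF Lne] ab by (metis)
    also have "\<dots> \<le> a * R + b * R"
      using xy ab by (intro add_mono mult_left_mono) (auto simp: B_def)
    also have "\<dots> = R" using ab by (simp flip: distrib_right)
    finally show "a *\<^sub>R x + b *\<^sub>R y \<in> B" using xy by (simp add: B_def)
  qed
  have u0B: "u0 \<in> B"
    using u0_V R by (simp add: B_def V_def omg_le[OF Lne])
  have compS: "compact Sph" unfolding Sph_def
    by (intro compact_Int_closed compB closed_Collect_eq) (auto intro!: continuous_intros)
  have gpos: "0 < omg L (N 0 u - u)" if u: "u \<in> Sph" for u
  proof (rule ccontr)
    assume "\<not> 0 < omg L (N 0 u - u)"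
    hence z: "omg L (N 0 u - u) \<le> 0" by simp
    have uV: "u \<in> V" using u BV by (simp add: Sph_def)
    have "N 0 u = u"
    proof (subst vec_eq_iff, intro allI)
      fix i
      show "N 0 u $ i = u $ i"
      proof (cases "i \<in> L")
        case True
        have "(N 0 u - u) $ i - (N 0 u - u) $ j0 \<le> 0" "(N 0 u - u) $ j0 - (N 0 u - u) $ i \<le> 0"
          using omg_ge[OF True j0, of "N 0 u - u"] omg_ge[OF j0 True, of "N 0 u - u"] z by auto
        moreover have "N 0 u $ j0 = 0" "u $ j0 = 0" using N_V[of 0 u] uV by (auto simp: V_def)
        ultimately show ?thesis by simp
      next
        case False thus ?thesis using N_V[of 0 u] uV by (simp add: V_def)
      qed
    qed
    hence "omg L (u - u0) \<le> C" by (rule fix0_bound[OF uV])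
    thus False using u R by (simp add: Sph_def)
  qed
  obtain m where m: "m > 0" "\<And>u. u \<in> Sph \<Longrightarrow> m \<le> omg L (N 0 u - u)"
  proof (cases "Sph = {}")
    case True thus ?thesis using that[of 1] by auto
  next
    case False
    have "continuous_on Sph (\<lambda>u. omg L (N 0 u - u))" by (auto intro!: continuous_intros)
    from continuous_attains_inf[OF compS False this] obtain us where
      "us \<in> Sph" "\<forall>u\<in>Sph. omg L (N 0 us - us) \<le> omg L (N 0 u - u)" by blast
    thus ?thesis using that[of "omg L (N 0 us - us)"] gpos by blast
  qed
  define \<delta> where "\<delta> = min (1/2) (m / 7)"
  have d: "0 < \<delta>" "\<delta> \<le> 1/2" "\<delta> < 1" "\<delta> \<le> m / 7" using m by (auto simp: \<delta>_def)
  define \<epsilon> where "\<epsilon> = ln (1 + \<delta>) - ln (1 - \<delta>)"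
  have eps: "\<epsilon> \<le> 3 * \<delta>" unfolding \<epsilon>_def using eps_bound d by simp
  have ceps: "omg L (cvec \<delta>) \<le> \<epsilon>" unfolding \<epsilon>_def using omg_cvec d by simp
  define P where "P w = u0 + (R / max R (omg L (w - u0))) *\<^sub>R (w - u0)" for w
  have PB: "P w \<in> B" if "w \<in> V" for w
  proof -
    define s where "s = R / max R (omg L (w - u0))"
    have s: "0 < s" "s * omg L (w - u0) \<le> R" using R omg_nonneg[OF Lne, of "w - u0"]
      by (auto simp: s_def field_simps)
    have "omg L (P w - u0) = s * omg L (w - u0)"
      using omg_scale[OF Lne, of s "w - u0"] s by (simp add: P_def s_def)
    thus ?thesis using s that u0_V by (simp add: B_def P_def V_def s_def)
  qed
  have contG: "continuous_on B (\<lambda>u. P (N \<delta> u))" unfolding P_def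
    using R by (auto intro!: continuous_intros)
  have GB: "(\<lambda>u. P (N \<delta> u)) \<in> B \<rightarrow> B" using PB N_V by auto
  obtain u where u: "u \<in> B" "P (N \<delta> u) = u"
    using brouwer[OF compB convB _ contG GB] u0B by blast
  define w where "w = N \<delta> u"
  define \<omega>0 where "\<omega>0 = omg L (w - u0)"
  show ?thesis
  proof (cases "\<omega>0 \<le> R")
    case True
    hence "P w = w" by (simp add: P_def \<omega>0_def max_def R(1)[THEN less_imp_neq, symmetric])
    hence fx: "N \<delta> u = u" using u by (simp add: w_def)
    have "\<forall>i\<in>L. D \<delta> i * h (E u) i = (D \<delta> j0 * h (E u) j0) * E u i"
      using fix_eig[OF fx d(3) _ less_imp_le[OF d(1)]] by blast
    thus ?thesis using d E_pos by blast
  next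
    case False
    define s where "s = R / \<omega>0"
    have s: "0 < s" "s < 1" "s * \<omega>0 = R" using False R by (auto simp: s_def)
    have uu: "u - u0 = s *\<^sub>R (w - u0)" using u(2) False
      by (simp add: P_def s_def \<omega>0_def max_def w_def) (metis add_diff_cancel_left')
    have ou: "omg L (u - u0) = R" using uu omg_scale[OF Lne, of s "w - u0"] s by (simp add: \<omega>0_def)
    hence uS: "u \<in> Sph" using u by (simp add: Sph_def)
    have "w - u = (1 - s) *\<^sub>R (w - u0)" using uu by (simp add: algebra_simps)
    hence owu: "omg L (w - u) = \<omega>0 - R" using omg_scale[OF Lne, of "1 - s" "w - u0"] s
      by (simp add: \<omega>0_def algebra_simps)
    have wN: "w = N 0 u + cvec \<delta>" by (simp add: w_def N_shift[of \<delta>])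
    have "\<omega>0 \<le> omg L (cvec \<delta>) + omg L (N 0 u - N 0 u0)"
      unfolding \<omega>0_def N0_u0 using omg_triangle[OF Lne, of "cvec \<delta>" "N 0 u - u0"] wN
      by (simp add: algebra_simps)
    also have "\<dots> \<le> \<epsilon> + R" using ceps N0_nonexp[of u u0] ou by simp
    finally have o0: "\<omega>0 \<le> \<epsilon> + R" .
    have "omg L (N 0 u - u) \<le> omg L (- cvec \<delta>) + omg L (w - u)"
      using omg_triangle[OF Lne, of "- cvec \<delta>" "w - u"] wN by (simp add: algebra_simps)
    also have "\<dots> \<le> 2 * \<epsilon>" using owu o0 ceps omg_uminus[of L "cvec \<delta>"] by simp
    finally have "m \<le> 2 * \<epsilon>" using m(2)[OF uS] by simp
    thus ?thesis using eps d m(1) by simp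
  qed
qed

end

lemma perturb_eig:
  fixes h :: "('n::finite \<Rightarrow> real) \<Rightarrow> ('n \<Rightarrow> real)"
  assumes "j0 \<in> L"
  and "\<And>x y i. pos_vec x \<Longrightarrow> pos_vec y \<Longrightarrow> (\<forall>k\<in>L. x k \<le> y k) \<Longrightarrow> i \<in> L \<Longrightarrow> h x i \<le> h y i"
  and "\<And>x t i. pos_vec x \<Longrightarrow> t > 0 \<Longrightarrow> i \<in> L \<Longrightarrow> h (\<lambda>j. t * x j) i = t * h x i"
  and "\<And>x i. pos_vec x \<Longrightarrow> i \<in> L \<Longrightarrow> h x i > 0"
  and "pos_vec v" "\<And>i. i \<in> L \<Longrightarrow> h v i = \<mu> * v i"
  and "\<And>x y \<nu>x \<nu>y. pos_vec x \<Longrightarrow> pos_vec y \<Longrightarrow> (\<forall>i\<in>L. h x i = \<nu>x * x i)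
              \<Longrightarrow> (\<forall>i\<in>L. h y i = \<nu>y * y i) \<Longrightarrow> hilbert L x y \<le> C"
  shows "\<exists>\<delta>>0. \<delta> < 1 \<and> (\<exists>w \<nu>. pos_vec w \<and> (\<forall>i\<in>L. (if i \<in> I0 then 1 + \<delta> else 1 - \<delta>) * h w i = \<nu> * w i))"
proof -
  interpret pf h L j0 v \<mu> C I0 by unfold_locales (fact assms)+
  show ?thesis using main_perturb unfolding D_def .
qed

lemma hilbert_ge_gen:
  fixes x y :: "'n::finite \<Rightarrow> real"
  assumes "pos_vec x" "pos_vec y" "i \<in> L" "j \<in> L"
  shows "ln ((y i * x j) / (x i * y j)) \<le> hilbert L x y"
proof -
  let ?S = "{(y i * x j) / (x i * y j) | i j. i \<in> L \<and> j \<in> L}"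
  have S: "?S = (\<lambda>(i,j). (y i * x j) / (x i * y j)) ` (L \<times> L)" by auto
  have "finite ?S" unfolding S by simp
  hence "(y i * x j) / (x i * y j) \<le> Max ?S" using assms(3,4) by (intro Max_ge) auto
  moreover have "(y i * x j) / (x i * y j) > 0" using assms(1,2) by (simp add: pos_vec_def)
  ultimately show ?thesis unfolding hilbert_def by simp
qed

locale fctx =
  fixes f :: "('n::finite \<Rightarrow> real) \<Rightarrow> ('n \<Rightarrow> real)"
  assumes fpos: "\<And>x. pos_vec x \<Longrightarrow> pos_vec (f x)"
    and fmono: "order_preserving_pos f"
    and fhom: "homogeneous_pos f"
begin

lemma f_mono: "pos_vec x \<Longrightarrow> pos_vec y \<Longrightarrow> (\<forall>j. x j \<le> y j) \<Longrightarrow> f x i \<le> f y i"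
  using fmono unfolding order_preserving_pos_def le_fun_def by blast

lemma f_pos: "pos_vec x \<Longrightarrow> f x i > 0"
  using fpos unfolding pos_vec_def by blast

lemma f_hom: "pos_vec x \<Longrightarrow> t > 0 \<Longrightarrow> f (\<lambda>j. t * x j) i = t * f x i"
  using fhom unfolding homogeneous_pos_def by metis

lemma pos_shift: "nonneg_vec x \<Longrightarrow> e > 0 \<Longrightarrow> pos_vec (\<lambda>j. x j + e)"
  by (simp add: nonneg_vec_def pos_vec_def add_nonneg_pos)

lemma ext0_bdd: "nonneg_vec x \<Longrightarrow> bdd_below ((\<lambda>e. f (\<lambda>j. x j + e) i) ` {0<..})"
  by (rule bdd_belowI[of _ 0]) (auto intro: less_imp_le f_pos pos_shift)

lemma ext0_le: "nonneg_vec x \<Longrightarrow> e > 0 \<Longrightarrow> ext0 f x i \<le> f (\<lambda>j. x j + e) i"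
  unfolding ext0_def by (rule cINF_lower[OF ext0_bdd]) auto

lemma ext0_nonneg: "nonneg_vec x \<Longrightarrow> 0 \<le> ext0 f x i"
  unfolding ext0_def by (rule cINF_greatest) (auto intro: less_imp_le f_pos pos_shift)

lemma ext0_less: "nonneg_vec x \<Longrightarrow> ext0 f x i < a \<Longrightarrow> \<exists>e>0. f (\<lambda>j. x j + e) i < a"
proof -
  assume x: "nonneg_vec x" and a: "ext0 f x i < a"
  have "(INF e\<in>{0<..}. f (\<lambda>j. x j + e) i) < a" using a by (simp add: ext0_def)
  thus ?thesis using cINF_less_iff[of "{0<..}", OF _ ext0_bdd[OF x]] by auto
qed

lemma ext0_mono: "nonneg_vec x \<Longrightarrow> nonneg_vec y \<Longrightarrow> (\<forall>j. x j \<le> y j) \<Longrightarrow> ext0 f x i \<le> ext0 f y i"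
proof -
  assume xy: "nonneg_vec x" "nonneg_vec y" "\<forall>j. x j \<le> y j"
  show ?thesis unfolding ext0_def[of f y]
  proof (rule cINF_greatest)
    fix e :: real assume e: "e \<in> {0<..}"
    have "ext0 f x i \<le> f (\<lambda>j. x j + e) i" using ext0_le xy e by auto
    also have "\<dots> \<le> f (\<lambda>j. y j + e) i" using xy e by (intro f_mono pos_shift) auto
    finally show "ext0 f x i \<le> f (\<lambda>j. y j + e) i" .
  qed auto
qed

lemma ext0_hom: "nonneg_vec x \<Longrightarrow> t > 0 \<Longrightarrow> ext0 f (\<lambda>j. t * x j) i = t * ext0 f x i"
proof -
  assume x: "nonneg_vec x" and t: "t > 0"
  have tx: "nonneg_vec (\<lambda>j. t * x j)" using x t by (simp add: nonneg_vec_def)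
  have "ext0 f (\<lambda>j. t * x j) i / t \<le> ext0 f x i" unfolding ext0_def[of f x]
  proof (rule cINF_greatest)
    fix e :: real assume e: "e \<in> {0<..}"
    have "ext0 f (\<lambda>j. t * x j) i \<le> f (\<lambda>j. t * x j + t * e) i" using ext0_le[OF tx, of "t * e"] e t by simp
    also have "\<dots> = f (\<lambda>j. t * (x j + e)) i" by (simp add: algebra_simps)
    also have "\<dots> = t * f (\<lambda>j. x j + e) i" by (rule f_hom[OF pos_shift[OF x]]) (use e t in auto)
    finally show "ext0 f (\<lambda>j. t * x j) i / t \<le> f (\<lambda>j. x j + e) i" using t by (simp add: field_simps)
  qed auto
  moreover have "t * ext0 f x i \<le> ext0 f (\<lambda>j. t * x j) i" unfolding ext0_def[of f "\<lambda>j. t * x j"]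
  proof (rule cINF_greatest)
    fix e :: real assume e: "e \<in> {0<..}"
    have "t * ext0 f x i \<le> t * f (\<lambda>j. x j + e / t) i" using ext0_le[OF x, of "e / t"] e t by simp
    also have "\<dots> = f (\<lambda>j. t * (x j + e / t)) i" by (rule f_hom[OF pos_shift[OF x], symmetric]) (use e t in auto)
    also have "\<dots> = f (\<lambda>j. t * x j + e) i" using t by (simp add: algebra_simps)
    finally show "t * ext0 f x i \<le> f (\<lambda>j. t * x j + e) i" .
  qed auto
  ultimately show ?thesis using t by (simp add: field_simps)
qed

lemma extinf_ge: "pos_vec y \<Longrightarrow> (\<forall>j. ereal (y j) \<le> x j) \<Longrightarrow> ereal (f y i) \<le> extinf f x i"
  unfolding extinf_def by (rule SUP_upper) auto

lemma extinf_less: "a < extinf f x i \<Longrightarrow> \<exists>y. pos_vec y \<and> (\<forall>j. ereal (y j) \<le> x j) \<and> a < ereal (f y i)"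
  unfolding extinf_def by (subst (asm) less_SUP_iff) auto

lemma extinf_mono: "(\<forall>j. x j \<le> x' j) \<Longrightarrow> extinf f x i \<le> extinf f x' i"
  unfolding extinf_def by (rule SUP_subset_mono) (auto intro: order_trans)

lemma ereal_scale_le: "t > 0 \<Longrightarrow> ereal (t * a) \<le> ereal t * X \<longleftrightarrow> ereal a \<le> X"
  by (cases X) auto

lemma extinf_hom:
  assumes x: "\<forall>j. x j > 0" and t: "t > 0"
  shows "extinf f (\<lambda>j. ereal t * x j) i = ereal t * extinf f x i"
proof -
  let ?Y = "\<lambda>x. {y. pos_vec y \<and> (\<forall>j. ereal (y j) \<le> x j)}"
  have img: "?Y (\<lambda>j. ereal t * x j) = (\<lambda>y j. t * y j) ` ?Y x"
  proof (intro equalityI subsetI)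
    fix y assume y: "y \<in> ?Y (\<lambda>j. ereal t * x j)"
    have "(\<lambda>j. (1/t) * y j) \<in> ?Y x"
    proof -
      have "ereal (t * ((1/t) * y j)) \<le> ereal t * x j" for j using y t by simp
      hence "ereal ((1/t) * y j) \<le> x j" for j using ereal_scale_le[OF t] by blast
      thus ?thesis using y t by (auto simp: pos_vec_def)
    qed
    thus "y \<in> (\<lambda>y j. t * y j) ` ?Y x"
    proof (rule rev_image_eqI[where x="\<lambda>j. (1/t) * y j"])
      show "y = (\<lambda>j. t * ((1/t) * y j))" using t by (simp add: fun_eq_iff)
    qed
  next
    fix y assume "y \<in> (\<lambda>y j. t * y j) ` ?Y x"
    then obtain z where z: "z \<in> ?Y x" "y = (\<lambda>j. t * z j)" by blast
    thus "y \<in> ?Y (\<lambda>j. ereal t * x j)" using t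
      by (auto simp: pos_vec_def ereal_scale_le[OF t] simp del: ereal_times)
  qed
  have ne: "?Y x \<noteq> {}"
  proof -
    define y where "y j = (if x j = \<infinity> then 1 else real_of_ereal (x j))" for j
    have "0 < y j \<and> ereal (y j) \<le> x j" for j
      using x[rule_format, of j] by (cases "x j") (auto simp: y_def)
    hence "y \<in> ?Y x" by (simp add: pos_vec_def)
    thus ?thesis by blast
  qed
  have "extinf f (\<lambda>j. ereal t * x j) i = (SUP y\<in>?Y x. ereal (f (\<lambda>j. t * y j) i))"
    unfolding extinf_def img image_image by simp
  also have "\<dots> = (SUP y\<in>?Y x. ereal t * ereal (f y i))"
    using t by (intro SUP_cong refl) (simp add: f_hom)
  also have "\<dots> = ereal t * extinf f x i"
    unfolding extinf_def using Sup_ereal_mult_left'[OF ne, of t "\<lambda>y. ereal (f y i)"] t by simp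
  finally show ?thesis .
qed


lemma ereal_le_div: "0 < r \<Longrightarrow> ereal (c * r) \<le> X \<Longrightarrow> ereal c \<le> X / ereal r"
  by (cases X) (auto simp: field_simps)

lemma ereal_less_div: "0 < r \<Longrightarrow> ereal c < X / ereal r \<Longrightarrow> ereal (c * r) < X"
  by (cases X) (auto simp: field_simps split: if_splits)

lemma ereal_div_le: "0 < r \<Longrightarrow> X \<le> ereal (c * r) \<Longrightarrow> X / ereal r \<le> ereal c"
  by (cases X) (auto simp: field_simps)

lemma inf_div: "0 < r \<Longrightarrow> \<infinity> / ereal r = \<infinity>"
  by simp

lemma r0_le: "pos_vec x \<Longrightarrow> (\<And>i. g x i / x i \<le> c) \<Longrightarrow> r0 g \<le> ereal c"
proof -
  assume x: "pos_vec x" and c: "\<And>i. g x i / x i \<le> c"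
  have "r0 g \<le> ereal (MAX i. g x i / x i)" unfolding r0_def using x by (intro INF_lower) auto
  also have "(MAX i. g x i / x i) \<le> c" using c by (subst Max_le_iff) auto
  finally show ?thesis by simp
qed

lemma lam_ge: "pos_vec x \<Longrightarrow> (\<And>i. c \<le> g (\<lambda>j. ereal (x j)) i / ereal (x i)) \<Longrightarrow> c \<le> lambdainf g"
proof -
  assume x: "pos_vec x" and c: "\<And>i. c \<le> g (\<lambda>j. ereal (x j)) i / ereal (x i)"
  have "c \<le> (MIN i. g (\<lambda>j. ereal (x j)) i / ereal (x i))" by (rule Min.boundedI) (use c in auto)
  also have "\<dots> \<le> lambdainf g" unfolding lambdainf_def by (rule SUP_upper) (use x in simp)
  finally show ?thesis .
qed

lemma hilbert_img: "{(y i * x j) / (x i * y j) | i j. i \<in> L \<and> j \<in> L} = (\<lambda>(i,j). (y i * x j) / (x i * y j)) ` (L \<times> L)"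
  by auto

lemma hilbert_cong: "(\<forall>i\<in>L. x i = x' i) \<Longrightarrow> (\<forall>i\<in>L. y i = y' i) \<Longrightarrow> hilbert L x y = hilbert L x' y'"
  unfolding hilbert_def hilbert_img by (intro arg_cong[where f="\<lambda>S. ln (Max S)"] image_cong) auto

lemma face0_apply: "face0 f J x i = (if i \<in> J then ext0 f (P0 J x) i else 0)"
  by (simp add: face0_def P0_def)

lemma faceinf_apply: "faceinf f K x i = (if i \<in> K then extinf f (Pinf K x) i else \<infinity>)"
  by (simp add: faceinf_def Pinf_def)

lemma P0_nonneg: "pos_vec x \<Longrightarrow> nonneg_vec (P0 J x)"
  by (auto simp: P0_def pos_vec_def nonneg_vec_def less_imp_le)



end

context fctx begin
lemma P0_P0: "P0 J (P0 J x) = P0 J x" by (simp add: P0_def fun_eq_iff)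

lemma part1:
  assumes Jproper: "J \<noteq> UNIV"
    and gap: "r0 (face0 f J) < lambdainf (faceinf f (- J))"
    and eig: "eigvecs0 (face0 f J) J \<noteq> {}" and bd: "dH_bounded0 J (eigvecs0 (face0 f J) J)"
    and I: "I \<noteq> {}" "I \<subseteq> J"
  shows "r0 (face0 f I) < lambdainf (faceinf f (- I))"
proof (cases "I = J")
  case True thus ?thesis using gap by simp
next
  case False
  obtain v \<mu> where v: "v \<in> part0 J" "face0 f J v = (\<lambda>i. \<mu> * v i)"
    using eig unfolding eigvecs0_def by auto
  obtain C where C: "\<forall>x\<in>eigvecs0 (face0 f J) J. \<forall>y\<in>eigvecs0 (face0 f J) J. hilbert J x y \<le> C"
    using bd unfolding dH_bounded0_def by auto
  obtain i1 where i1: "i1 \<in> I" using I by auto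
  have i1J: "i1 \<in> J" using i1 I by auto
  obtain k1 where k1: "k1 \<in> J" "k1 \<notin> I" using False I by auto
  have vnn: "nonneg_vec v" and vJ: "\<And>i. v i > 0 \<longleftrightarrow> i \<in> J" using v(1) unfolding part0_def by auto
  have v0: "v i = 0" if "i \<notin> J" for i
  proof -
    have "0 \<le> v i" "\<not> 0 < v i" using vnn vJ[of i] that unfolding nonneg_vec_def by auto
    thus ?thesis by linarith
  qed
  have P0v: "P0 J v = v" using v0 by (auto simp: P0_def)
  define h where "h x = ext0 f (P0 J x)" for x
  define v' where "v' i = (if i \<in> J then v i else 1)" for i
  have v'pos: "pos_vec v'" using vJ by (auto simp: v'_def pos_vec_def)
  have P0v': "P0 J v' = v" using v0 by (auto simp: P0_def v'_def)
  have hmono: "h x i \<le> h y i" if "pos_vec x" "pos_vec y" "\<forall>k\<in>J. x k \<le> y k" for x y i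
    unfolding h_def using that by (intro ext0_mono P0_nonneg) (auto simp: P0_def)
  have hhom: "h (\<lambda>j. t * x j) i = t * h x i" if "pos_vec x" "t > 0" for x t i
  proof -
    have "P0 J (\<lambda>j. t * x j) = (\<lambda>j. t * P0 J x j)" by (auto simp: P0_def)
    thus ?thesis unfolding h_def using ext0_hom[OF P0_nonneg[OF that(1)] that(2)] by simp
  qed
  have hnn: "0 \<le> h x i" if "pos_vec x" for x i unfolding h_def by (rule ext0_nonneg[OF P0_nonneg[OF that]])
  have veig: "h v' i = \<mu> * v' i" if "i \<in> J" for i
  proof -
    have "face0 f J v i = \<mu> * v i" using v(2) by simp
    thus ?thesis using that by (simp add: face0_apply h_def P0v P0v' v'_def)
  qed
  have eigE: "P0 J x \<in> eigvecs0 (face0 f J) J" if "pos_vec x" "\<forall>i\<in>J. h x i = \<nu> * x i" for x \<nu>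
  proof -
    have "P0 J x \<in> part0 J" using that(1) by (auto simp: part0_def P0_def nonneg_vec_def pos_vec_def less_imp_le)
    moreover have "face0 f J (P0 J x) = (\<lambda>i. \<nu> * P0 J x i)"
      using that(2) by (auto simp: fun_eq_iff face0_apply P0_P0 h_def) (auto simp: P0_def)
    ultimately show ?thesis unfolding eigvecs0_def by blast
  qed
  have hbnd: "hilbert J x y \<le> C" if "pos_vec x" "pos_vec y" "\<forall>i\<in>J. h x i = \<nu>x * x i" "\<forall>i\<in>J. h y i = \<nu>y * y i" for x y \<nu>x \<nu>y
  proof -
    have "hilbert J (P0 J x) (P0 J y) \<le> C" using C eigE that by blast
    moreover have "hilbert J (P0 J x) (P0 J y) = hilbert J x y" by (rule hilbert_cong) (auto simp: P0_def)
    ultimately show ?thesis by simp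
  qed
  have mu_pos: "\<mu> > 0"
  proof (rule ccontr)
    assume "\<not> \<mu> > 0"
    moreover have "0 \<le> \<mu> * v' k1" using hnn[OF v'pos, of k1] veig[OF k1(1)] by simp
    moreover have "v' k1 > 0" using v'pos by (simp add: pos_vec_def)
    ultimately have mu0: "\<mu> = 0" by (simp add: zero_le_mult_iff)
    have h0: "h x i = 0" if "pos_vec x" "i \<in> J" for x i
    proof -
      define c where "c = Max (range (\<lambda>k. x k / v' k))"
      have "x k / v' k \<le> c" for k unfolding c_def by (rule Max_ge) auto
      hence xc: "x k \<le> c * v' k" for k using v'pos by (simp add: pos_vec_def pos_divide_le_eq)
      have x0: "0 < x k1" "0 < v' k1" using that(1) v'pos by (auto simp: pos_vec_def)
      hence "0 < c * v' k1" using xc[of k1] by linarith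
      hence cpos: "c > 0" using x0(2) zero_less_mult_pos2 by blast
      have "h x i \<le> h (\<lambda>j. c * v' j) i" by (rule hmono) (use that v'pos cpos xc in \<open>auto simp: pos_vec_def\<close>)
      also have "\<dots> = c * h v' i" by (rule hhom[OF v'pos cpos])
      also have "\<dots> = 0" using veig[OF that(2)] mu0 by simp
      finally show ?thesis using hnn[OF that(1), of i] by linarith
    qed
    define s where "s = exp (C + 1)"
    define x where "x k = (if k = i1 then s else 1)" for k
    have xpos: "pos_vec x" by (auto simp: x_def s_def pos_vec_def)
    have one: "pos_vec (\<lambda>k. 1::real)" by (simp add: pos_vec_def)
    have "hilbert J x (\<lambda>k. 1) \<le> C" by (rule hbnd[OF xpos one, of 0 0]) (use h0 xpos one in auto)
    moreover have "ln ((1 * x i1) / (x k1 * 1)) \<le> hilbert J x (\<lambda>k. 1)"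
      using hilbert_ge_gen[OF xpos one k1(1) i1J] by simp
    moreover have "ln ((1 * x i1) / (x k1 * 1)) = C + 1" using k1 i1 by (auto simp: x_def s_def)
    ultimately show False by simp
  qed
  have hpos: "h x i > 0" if "pos_vec x" "i \<in> J" for x i
  proof -
    define c where "c = Min (range (\<lambda>k. x k / v' k))"
    have "c \<le> x k / v' k" for k unfolding c_def by (rule Min_le) auto
    hence xc: "c * v' k \<le> x k" for k using v'pos by (simp add: pos_vec_def pos_le_divide_eq)
    have "c \<in> range (\<lambda>k. x k / v' k)" unfolding c_def by (rule Min_in) auto
    hence cpos: "c > 0" using that(1) v'pos by (auto simp: pos_vec_def)
    have "c * (\<mu> * v' i) = c * h v' i" using veig that by simp
    also have "\<dots> = h (\<lambda>j. c * v' j) i" by (rule hhom[OF v'pos cpos, symmetric])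
    also have "\<dots> \<le> h x i" by (rule hmono) (use that v'pos cpos xc in \<open>auto simp: pos_vec_def\<close>)
    moreover have "0 < c * (\<mu> * v' i)" using cpos mu_pos v'pos by (simp add: pos_vec_def)
    ultimately show ?thesis by linarith
  qed
  obtain \<delta> w \<nu> where d: "0 < \<delta>" "\<delta> < 1" and w: "pos_vec w"
    and weig: "\<forall>i\<in>J. (if i \<in> I then 1 + \<delta> else 1 - \<delta>) * h w i = \<nu> * w i"
  proof -
    have "\<exists>\<delta>>0. \<delta> < 1 \<and> (\<exists>w \<nu>. pos_vec w \<and> (\<forall>i\<in>J. (if i \<in> I then 1 + \<delta> else 1 - \<delta>) * h w i = \<nu> * w i))"
      apply (rule perturb_eig[of k1 J h v' \<mu> C I])
      subgoal by (rule k1(1))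
      subgoal by (rule hmono) auto
      subgoal by (rule hhom) auto
      subgoal by (rule hpos) auto
      subgoal by (rule v'pos)
      subgoal by (rule veig) auto
      subgoal by (rule hbnd) auto
      done
    thus ?thesis using that by blast
  qed
  have wp: "w i > 0" for i using w by (simp add: pos_vec_def)
  have nu: "\<nu> > 0"
  proof -
    have "0 < (1 + \<delta>) * h w i1" using hpos[OF w i1J] d by simp
    also have "\<dots> = \<nu> * w i1" using weig i1J i1 by auto
    finally show ?thesis using wp[of i1] zero_less_mult_pos2 by blast
  qed
  define a where "a = \<nu> / (1 + \<delta>)"
  define b where "b = \<nu> / (1 - \<delta>)"
  have ab: "0 < a" "a < b" using nu d by (auto simp: a_def b_def field_simps)
  have hI: "h w i = a * w i" if "i \<in> I" for i
  proof -
    have "i \<in> J" using that I(2) by auto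
    hence "(1 + \<delta>) * h w i = \<nu> * w i" using weig that by auto
    thus ?thesis using d by (simp add: a_def field_simps)
  qed
  have hK: "h w k = b * w k" if "k \<in> J" "k \<notin> I" for k
    using weig that d by (auto simp: b_def field_simps)
  have hJa: "a * w k \<le> h w k" if "k \<in> J" for k
    using hI hK ab wp[of k] that by (cases "k \<in> I") auto
  have r0I: "r0 (face0 f I) \<le> ereal a"
  proof (rule r0_le[OF w])
    fix i show "face0 f I w i / w i \<le> a"
    proof (cases "i \<in> I")
      case True
      have "ext0 f (P0 I w) i \<le> ext0 f (P0 J w) i"
        by (rule ext0_mono[OF P0_nonneg[OF w] P0_nonneg[OF w]]) (use I(2) wp in \<open>auto simp: P0_def less_imp_le\<close>)
      hence "face0 f I w i \<le> a * w i" using hI[OF True] True by (simp add: face0_apply h_def)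
      thus ?thesis using wp[of i] by (simp add: pos_divide_le_eq)
    next
      case False thus ?thesis using ab by (simp add: face0_apply)
    qed
  qed
  have aJ: "ereal a \<le> r0 (face0 f J)"
    unfolding r0_def
  proof (rule INF_greatest)
    fix x :: "'n \<Rightarrow> real" assume "x \<in> {x. pos_vec x}" hence x: "pos_vec x" by simp
    define c where "c = Min ((\<lambda>k. x k / w k) ` J)"
    have Jne: "J \<noteq> {}" using k1 by auto
    have "c \<in> (\<lambda>k. x k / w k) ` J" unfolding c_def using Jne by (intro Min_in) auto
    then obtain j where j: "j \<in> J" "c = x j / w j" by auto
    have cle: "c \<le> x k / w k" if "k \<in> J" for k unfolding c_def using that by (intro Min_le) auto
    have cpos: "c > 0" using j x wp by (simp add: pos_vec_def)
    have xj: "x j = c * w j" using j wp[of j] by simp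
    have "a * x j = c * (a * w j)" using xj by simp
    also have "\<dots> \<le> c * h w j" using hJa[OF j(1)] cpos by simp
    also have "\<dots> = h (\<lambda>k. c * w k) j" by (rule hhom[OF w cpos, symmetric])
    also have "\<dots> \<le> h x j" by (rule hmono) (use w cpos x cle wp in \<open>auto simp: pos_vec_def pos_le_divide_eq\<close>)
    finally have "a \<le> face0 f J x j / x j" using x j by (simp add: face0_apply h_def pos_le_divide_eq pos_vec_def)
    also have "\<dots> \<le> (MAX i. face0 f J x i / x i)" by (rule Max_ge) auto
    finally show "ereal a \<le> ereal (MAX i. face0 f J x i / x i)" by simp
  qed
  have aLam: "ereal a < lambdainf (faceinf f (-J))" using aJ gap by simp
  obtain rho where rho: "a < rho" "ereal rho < lambdainf (faceinf f (-J))"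
    using ereal_dense2[OF aLam] by auto
  obtain y where y: "pos_vec y" "ereal rho < (MIN i. faceinf f (-J) (\<lambda>j. ereal (y j)) i / ereal (y i))"
    using rho(2) unfolding lambdainf_def by (subst (asm) less_SUP_iff) auto
  have yp: "y i > 0" for i using y by (simp add: pos_vec_def)
  have yk: "ereal (rho * y k) < extinf f (Pinf (-J) (\<lambda>j. ereal (y j))) k" if "k \<notin> J" for k
  proof -
    have "(MIN i. faceinf f (-J) (\<lambda>j. ereal (y j)) i / ereal (y i)) \<le> faceinf f (-J) (\<lambda>j. ereal (y j)) k / ereal (y k)"
      by (rule Min_le) auto
    hence "ereal rho < faceinf f (-J) (\<lambda>j. ereal (y j)) k / ereal (y k)" using y(2) by simp
    thus ?thesis using that yp[of k] by (intro ereal_less_div) (auto simp: faceinf_apply)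
  qed
  have "\<forall>k\<in>-J. \<exists>u. pos_vec u \<and> (\<forall>j. ereal (u j) \<le> Pinf (-J) (\<lambda>j. ereal (y j)) j) \<and> ereal (rho * y k) < ereal (f u k)"
    using yk extinf_less by blast
  then obtain U where U: "\<And>k. k \<in> -J \<Longrightarrow> pos_vec (U k) \<and> (\<forall>j. ereal (U k j) \<le> Pinf (-J) (\<lambda>j. ereal (y j)) j) \<and> ereal (rho * y k) < ereal (f (U k) k)"
    by metis
  obtain k0 where k0: "k0 \<in> -J" using Jproper by auto
  define Um where "Um i = Max ((\<lambda>k. U k i) ` (-J))" for i
  have Uge: "U k i \<le> Um i" if "k \<in> -J" for k i unfolding Um_def using that by (intro Max_ge) auto
  have Umpos: "pos_vec Um" using Uge[OF k0] U[OF k0] by (auto simp: pos_vec_def intro: order_less_le_trans)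
  have Umy: "Um i \<le> y i" if iJ: "i \<notin> J" for i
  proof -
    have "U k i \<le> y i" if "k \<in> -J" for k
    proof -
      have "ereal (U k i) \<le> Pinf (-J) (\<lambda>j. ereal (y j)) i" using U[OF that] by blast
      thus ?thesis using iJ by (simp add: Pinf_def)
    qed
    thus ?thesis unfolding Um_def using k0 by (subst Max_le_iff) auto
  qed
  have fUm: "rho * y k < f Um k" if "k \<notin> J" for k
  proof -
    have "rho * y k < f (U k) k" using U[of k] that by simp
    also have "\<dots> \<le> f Um k" using U[of k] that Umpos Uge by (intro f_mono) auto
    finally show ?thesis .
  qed
  define c' where "c' = (a + b) / 2"
  have c': "a < c'" "c' < b" using ab by (auto simp: c'_def)
  define e where "e = Min (range y)"
  have "e \<in> range y" unfolding e_def by (rule Min_in) auto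
  hence epos: "e > 0" using yp by auto
  have ey: "e \<le> y i" for i unfolding e_def by (rule Min_le) auto
  define t where "t = 1 + (\<Sum>k\<in>J. Um k / w k + c' * e / ((b - c') * w k))"
  have terms: "0 \<le> Um k / w k" "0 \<le> c' * e / ((b - c') * w k)" for k
    using Umpos wp[of k] c' ab epos by (auto simp: pos_vec_def less_imp_le)
  have tsum: "Um k / w k + c' * e / ((b - c') * w k) \<le> t - 1" if "k \<in> J" for k
  proof -
    have "Um k / w k + c' * e / ((b - c') * w k) \<le> (\<Sum>k\<in>J. Um k / w k + c' * e / ((b - c') * w k))"
      by (rule member_le_sum[OF that]) (use terms in \<open>auto intro: add_nonneg_nonneg\<close>)
    thus ?thesis by (simp add: t_def)
  qed
  have tpos: "t > 0" using tsum[OF k1(1)] terms[of k1] by linarith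
  have tUm: "Um k \<le> t * w k" if "k \<in> J" for k
  proof -
    have "Um k / w k \<le> t" using tsum[OF that] terms[of k] by linarith
    thus ?thesis using wp[of k] by (simp add: pos_divide_le_eq)
  qed
  have tc: "c' * e \<le> t * ((b - c') * w k)" if "k \<in> J" for k
  proof -
    have "c' * e / ((b - c') * w k) \<le> t" using tsum[OF that] terms[of k] by linarith
    moreover have "(b - c') * w k > 0" using c' wp[of k] by simp
    ultimately show ?thesis by (simp add: pos_divide_le_eq)
  qed
  define x where "x i = (if i \<in> I then 1 else if i \<in> J then t * w i + e else y i)" for i
  have xpos: "pos_vec x" using tpos wp epos yp by (auto simp: x_def pos_vec_def add_pos_pos)
  have xp: "x i > 0" for i using xpos by (simp add: pos_vec_def)
  have "ereal (min c' rho) \<le> lambdainf (faceinf f (-I))"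
  proof (rule lam_ge[OF xpos])
    fix i
    show "ereal (min c' rho) \<le> faceinf f (-I) (\<lambda>j. ereal (x j)) i / ereal (x i)"
    proof (cases "i \<in> I")
      case True thus ?thesis using xp[of i] by (simp add: faceinf_apply)
    next
      case iI: False
      show ?thesis
      proof (cases "i \<in> J")
        case iJ: True
        define zz where "zz j = P0 J (\<lambda>k. t * w k) j + e" for j
        have tw: "pos_vec (\<lambda>k. t * w k)" using tpos wp by (simp add: pos_vec_def)
        have zzpos: "pos_vec zz" using epos tpos wp by (auto simp: zz_def P0_def pos_vec_def add_pos_pos)
        have zzZ: "\<forall>j. ereal (zz j) \<le> Pinf (-I) (\<lambda>j. ereal (x j)) j"
          using ey by (auto simp: zz_def P0_def Pinf_def x_def)
        have "ext0 f (P0 J (\<lambda>k. t * w k)) i \<le> f zz i" unfolding zz_def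
          by (rule ext0_le[OF P0_nonneg[OF tw] epos])
        moreover have "P0 J (\<lambda>k. t * w k) = (\<lambda>k. t * P0 J w k)" by (auto simp: P0_def)
        moreover have "ext0 f (\<lambda>k. t * P0 J w k) i = t * h w i"
          unfolding h_def by (rule ext0_hom[OF P0_nonneg[OF w] tpos])
        moreover have "h w i = b * w i" using hK iJ iI by simp
        ultimately have 1: "t * (b * w i) \<le> f zz i" by simp
        have "c' * x i = c' * (t * w i) + c' * e" using iI iJ by (simp add: x_def algebra_simps)
        also have "\<dots> \<le> c' * (t * w i) + t * ((b - c') * w i)" using tc[OF iJ] by simp
        also have "\<dots> = t * (b * w i)" by (simp add: algebra_simps)
        finally have "ereal (c' * x i) \<le> ereal (f zz i)" using 1 by simp
        also have "\<dots> \<le> extinf f (Pinf (-I) (\<lambda>j. ereal (x j))) i" by (rule extinf_ge[OF zzpos zzZ])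
        finally have "ereal c' \<le> faceinf f (-I) (\<lambda>j. ereal (x j)) i / ereal (x i)"
          using iI by (intro ereal_le_div[OF xp]) (simp add: faceinf_apply)
        thus ?thesis by (rule order_trans[rotated]) simp
      next
        case iJ: False
        have UmZ: "\<forall>j. ereal (Um j) \<le> Pinf (-I) (\<lambda>j. ereal (x j)) j"
        proof
          fix j show "ereal (Um j) \<le> Pinf (-I) (\<lambda>j. ereal (x j)) j"
            using tUm[of j] Umy[of j] epos by (auto simp: Pinf_def x_def)
        qed
        have "rho * x i \<le> f Um i" using fUm[OF iJ] iI iJ by (simp add: x_def)
        hence "ereal (rho * x i) \<le> ereal (f Um i)" by simp
        also have "\<dots> \<le> extinf f (Pinf (-I) (\<lambda>j. ereal (x j))) i" by (rule extinf_ge[OF Umpos UmZ])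
        finally have "ereal rho \<le> faceinf f (-I) (\<lambda>j. ereal (x j)) i / ereal (x i)"
          using iI by (intro ereal_le_div[OF xp]) (simp add: faceinf_apply)
        thus ?thesis by (rule order_trans[rotated]) simp
      qed
    qed
  qed
  moreover have "ereal a < ereal (min c' rho)" using c' rho by simp
  ultimately show ?thesis using r0I by (meson order_le_less_trans order_less_le_trans)
qed


end

context fctx begin

lemma part2:
  assumes Jne: "J \<noteq> {}"
    and gap: "r0 (face0 f J) < lambdainf (faceinf f (- J))"
    and eig: "eigvecsinf (faceinf f (- J)) (- J) \<noteq> {}"
    and bd: "dH_boundedinf (- J) (eigvecsinf (faceinf f (- J)) (- J))"
    and I: "J \<subseteq> I" "I \<noteq> UNIV"
  shows "r0 (face0 f I) < lambdainf (faceinf f (- I))"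
proof (cases "I = J")
  case True thus ?thesis using gap by simp
next
  case False
  obtain v \<mu> where v: "v \<in> partinf (-J)" "faceinf f (-J) v = (\<lambda>i. ereal \<mu> * v i)"
    using eig unfolding eigvecsinf_def by auto
  obtain C where C: "\<forall>x\<in>eigvecsinf (faceinf f (-J)) (-J). \<forall>y\<in>eigvecsinf (faceinf f (-J)) (-J).
      hilbert (-J) (\<lambda>i. real_of_ereal (x i)) (\<lambda>i. real_of_ereal (y i)) \<le> C"
    using bd unfolding dH_boundedinf_def by auto
  obtain j1 where j1: "j1 \<in> J" using Jne by auto
  obtain k1 where k1: "k1 \<in> I" "k1 \<notin> J" using False I by auto
  obtain i1 where i1: "i1 \<notin> I" using I by auto
  have i1J: "i1 \<notin> J" using i1 I by auto
  have vpos: "\<And>i. v i > 0" and vfin: "\<And>i. v i < \<infinity> \<longleftrightarrow> i \<notin> J"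
    using v(1) unfolding partinf_def by auto
  have vJ: "v i = \<infinity>" if "i \<in> J" for i using vfin[of i] that by (cases "v i") auto
  have Pv: "Pinf (-J) v = v" using vJ by (auto simp: Pinf_def fun_eq_iff)
  have mu_pos: "\<mu> > 0"
  proof -
    have "faceinf f (-J) v j1 = \<infinity>" using j1 by (simp add: faceinf_apply)
    hence "ereal \<mu> * \<infinity> = \<infinity>" using v(2) vJ[OF j1] by (metis)
    thus ?thesis by (simp add: ereal_mult_infty split: if_splits)
  qed
  define v' where "v' i = (if i \<in> J then 1 else real_of_ereal (v i))" for i
  have vv': "ereal (v' i) = v i" if "i \<notin> J" for i
    using vfin[of i] vpos[of i] that by (cases "v i") (auto simp: v'_def)
  have v'pos: "pos_vec v'" unfolding pos_vec_def
  proof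
    fix i show "0 < v' i" using vfin[of i] vpos[of i] by (cases "v i") (auto simp: v'_def)
  qed
  have Pv': "Pinf (-J) (\<lambda>j. ereal (v' j)) = v" using vJ vv' by (auto simp: Pinf_def fun_eq_iff)
  define EXT where "EXT x = extinf f (Pinf (-J) (\<lambda>j. ereal (x j)))" for x
  have EXTv: "EXT v' i = ereal (\<mu> * v' i)" if "i \<notin> J" for i
  proof -
    have "EXT v' i = faceinf f (-J) v i" using that by (simp add: EXT_def Pv' faceinf_apply Pv)
    also have "\<dots> = ereal \<mu> * v i" using v(2) by simp
    also have "\<dots> = ereal (\<mu> * v' i)" using vv'[OF that, symmetric] by simp
    finally show ?thesis .
  qed
  have Ppos: "\<forall>j. Pinf (-J) (\<lambda>j. ereal (x j)) j > 0" if "pos_vec x" for x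
    using that by (auto simp: Pinf_def pos_vec_def)
  have EXTmono: "EXT x i \<le> EXT y i" if "\<forall>k\<in>-J. x k \<le> y k" for x y i
    unfolding EXT_def by (rule extinf_mono) (use that in \<open>auto simp: Pinf_def\<close>)
  have EXThom: "EXT (\<lambda>j. t * x j) i = ereal t * EXT x i" if "pos_vec x" "t > 0" for x t i
  proof -
    have "Pinf (-J) (\<lambda>j. ereal (t * x j)) = (\<lambda>j. ereal t * Pinf (-J) (\<lambda>j. ereal (x j)) j)"
      using that(2) by (auto simp: Pinf_def fun_eq_iff)
    thus ?thesis unfolding EXT_def using extinf_hom[OF Ppos[OF that(1)] that(2)] by simp
  qed
  have EXTlow: "ereal (f x i) \<le> EXT x i" if "pos_vec x" for x i
    unfolding EXT_def by (rule extinf_ge[OF that]) (auto simp: Pinf_def)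
  have EXTup: "\<exists>B. EXT x i \<le> ereal B" if "pos_vec x" "i \<notin> J" for x i
  proof -
    define c where "c = Max (range (\<lambda>k. x k / v' k))"
    have "x k / v' k \<le> c" for k unfolding c_def by (rule Max_ge) auto
    hence xc: "x k \<le> c * v' k" for k using v'pos by (simp add: pos_vec_def pos_divide_le_eq)
    have x0: "0 < x k1" "0 < v' k1" using that(1) v'pos by (auto simp: pos_vec_def)
    hence "0 < c * v' k1" using xc[of k1] by linarith
    hence cpos: "c > 0" using x0(2) zero_less_mult_pos2 by blast
    have "EXT x i \<le> EXT (\<lambda>j. c * v' j) i" by (rule EXTmono) (use xc in auto)
    also have "\<dots> = ereal c * EXT v' i" by (rule EXThom[OF v'pos cpos])
    also have "\<dots> = ereal (c * (\<mu> * v' i))" using EXTv[OF that(2)] by simp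
    finally show ?thesis by blast
  qed
  define h where "h x i = real_of_ereal (EXT x i)" for x i
  have EXTh: "EXT x i = ereal (h x i) \<and> 0 < h x i" if xi: "pos_vec x" "i \<notin> J" for x i
  proof -
    obtain B where B: "EXT x i \<le> ereal B" using EXTup[OF xi] by blast
    have fp: "0 < f x i" using f_pos[OF xi(1)] .
    show ?thesis using EXTlow[OF xi(1), of i] B fp unfolding h_def
      by (cases "EXT x i") auto
  qed
  have hmono: "h x i \<le> h y i" if "pos_vec x" "pos_vec y" "\<forall>k\<in>-J. x k \<le> y k" "i \<in> -J" for x y i
    using EXTmono[OF that(3), of i] EXTh[OF that(1), of i] EXTh[OF that(2), of i] that(4) by simp
  have hhom: "h (\<lambda>j. t * x j) i = t * h x i" if "pos_vec x" "t > 0" "i \<in> -J" for x t i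
  proof -
    have tx: "pos_vec (\<lambda>j. t * x j)" using that by (simp add: pos_vec_def)
    show ?thesis using EXThom[OF that(1,2), of i] EXTh[OF tx, of i] EXTh[OF that(1), of i] that(3) by simp
  qed
  have hpos: "h x i > 0" if "pos_vec x" "i \<in> -J" for x i using EXTh[OF that(1), of i] that(2) by simp
  have veig: "h v' i = \<mu> * v' i" if "i \<in> -J" for i using EXTv[of i] that by (simp add: h_def)
  have eigE: "Pinf (-J) (\<lambda>j. ereal (x j)) \<in> eigvecsinf (faceinf f (-J)) (-J)"
    if "pos_vec x" "\<forall>i\<in>-J. h x i = \<nu> * x i" for x \<nu>
  proof -
    have nu: "\<nu> > 0"
    proof -
      have "0 < h x k1" using hpos[OF that(1)] k1 by simp
      also have "\<dots> = \<nu> * x k1" using that(2) k1 by simp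
      finally show ?thesis using that(1) zero_less_mult_pos2 by (auto simp: pos_vec_def)
    qed
    have "Pinf (-J) (\<lambda>j. ereal (x j)) \<in> partinf (-J)"
      using that(1) by (auto simp: partinf_def Pinf_def pos_vec_def)
    moreover have "faceinf f (-J) (Pinf (-J) (\<lambda>j. ereal (x j))) = (\<lambda>i. ereal \<nu> * Pinf (-J) (\<lambda>j. ereal (x j)) i)"
    proof
      fix i show "faceinf f (-J) (Pinf (-J) (\<lambda>j. ereal (x j))) i = ereal \<nu> * Pinf (-J) (\<lambda>j. ereal (x j)) i"
      proof (cases "i \<in> J")
        case True thus ?thesis using nu by (simp add: faceinf_apply Pinf_def)
      next
        case False
        have PP: "Pinf (-J) (Pinf (-J) (\<lambda>j. ereal (x j))) = Pinf (-J) (\<lambda>j. ereal (x j))"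
          by (auto simp: Pinf_def fun_eq_iff)
        have "faceinf f (-J) (Pinf (-J) (\<lambda>j. ereal (x j))) i = EXT x i"
          using False by (simp add: faceinf_apply PP EXT_def)
        also have "\<dots> = ereal (\<nu> * x i)" using EXTh[OF that(1) False] that(2) False by simp
        finally show ?thesis using False by (simp add: Pinf_def)
      qed
    qed
    ultimately show ?thesis unfolding eigvecsinf_def by blast
  qed
  have hbnd: "hilbert (-J) x y \<le> C"
    if "pos_vec x" "pos_vec y" "\<forall>i\<in>-J. h x i = \<nu>x * x i" "\<forall>i\<in>-J. h y i = \<nu>y * y i" for x y \<nu>x \<nu>y
  proof -
    have "hilbert (-J) (\<lambda>i. real_of_ereal (Pinf (-J) (\<lambda>j. ereal (x j)) i)) (\<lambda>i. real_of_ereal (Pinf (-J) (\<lambda>j. ereal (y j)) i)) \<le> C"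
      using C eigE[OF that(1,3)] eigE[OF that(2,4)] by blast
    moreover have "hilbert (-J) (\<lambda>i. real_of_ereal (Pinf (-J) (\<lambda>j. ereal (x j)) i)) (\<lambda>i. real_of_ereal (Pinf (-J) (\<lambda>j. ereal (y j)) i)) = hilbert (-J) x y"
      by (rule hilbert_cong) (auto simp: Pinf_def)
    ultimately show ?thesis by simp
  qed
  obtain \<delta> w \<nu> where d: "0 < \<delta>" "\<delta> < 1" and w: "pos_vec w"
    and weig: "\<forall>i\<in>-J. (if i \<in> I - J then 1 + \<delta> else 1 - \<delta>) * h w i = \<nu> * w i"
  proof -
    have "\<exists>\<delta>>0. \<delta> < 1 \<and> (\<exists>w \<nu>. pos_vec w \<and> (\<forall>i\<in>-J. (if i \<in> I - J then 1 + \<delta> else 1 - \<delta>) * h w i = \<nu> * w i))"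
      apply (rule perturb_eig[of k1 "-J" h v' \<mu> C "I - J"])
      subgoal using k1 by simp
      subgoal by (rule hmono) auto
      subgoal by (rule hhom) auto
      subgoal by (rule hpos) auto
      subgoal by (rule v'pos)
      subgoal by (rule veig) auto
      subgoal by (rule hbnd) auto
      done
    thus ?thesis using that by blast
  qed
  have wp: "w i > 0" for i using w by (simp add: pos_vec_def)
  have nu: "\<nu> > 0"
  proof -
    have "0 < (1 - \<delta>) * h w i1" using hpos[OF w, of i1] i1J d by simp
    also have "\<dots> = \<nu> * w i1" using weig[rule_format, of i1] i1J i1 by simp
    finally show ?thesis using wp[of i1] zero_less_mult_pos2 by blast
  qed
  define a where "a = \<nu> / (1 + \<delta>)"
  define b where "b = \<nu> / (1 - \<delta>)"
  have ab: "0 < a" "a < b" using nu d by (auto simp: a_def b_def field_simps)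
  have hK: "h w i = a * w i" if "i \<in> I" "i \<notin> J" for i
  proof -
    have "(1 + \<delta>) * h w i = \<nu> * w i" using weig[rule_format, of i] that by simp
    thus ?thesis using d by (simp add: a_def field_simps)
  qed
  have hO: "h w i = b * w i" if "i \<notin> I" for i
  proof -
    have "i \<notin> J" using that I by auto
    hence "(1 - \<delta>) * h w i = \<nu> * w i" using weig[rule_format, of i] that by simp
    thus ?thesis using d by (simp add: b_def field_simps)
  qed
  have hLb: "h w i \<le> b * w i" if "i \<notin> J" for i
    using hK hO ab wp[of i] that by (cases "i \<in> I") auto
  have stepA: "ereal b \<le> lambdainf (faceinf f (-I))"
  proof (rule lam_ge[OF w])
    fix i show "ereal b \<le> faceinf f (-I) (\<lambda>j. ereal (w j)) i / ereal (w i)"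
    proof (cases "i \<in> I")
      case True thus ?thesis using wp[of i] by (simp add: faceinf_apply)
    next
      case False
      have iJ: "i \<notin> J" using False I by auto
      have "ereal (b * w i) = EXT w i" using EXTh[OF w iJ] hO[OF False] by simp
      also have "\<dots> \<le> extinf f (Pinf (-I) (\<lambda>j. ereal (w j))) i"
        unfolding EXT_def by (rule extinf_mono) (use I in \<open>auto simp: Pinf_def\<close>)
      finally show ?thesis using False by (intro ereal_le_div[OF wp]) (simp add: faceinf_apply)
    qed
  qed
  have stepB: "lambdainf (faceinf f (-J)) \<le> ereal b"
    unfolding lambdainf_def
  proof (rule SUP_least)
    fix x :: "'n \<Rightarrow> real" assume "x \<in> {x. pos_vec x}" hence x: "pos_vec x" by simp
    have Lne: "-J \<noteq> {}" using k1 by auto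
    define c where "c = Max ((\<lambda>k. x k / w k) ` (-J))"
    have "c \<in> (\<lambda>k. x k / w k) ` (-J)" unfolding c_def using Lne by (intro Max_in) auto
    then obtain k where k: "k \<in> -J" "c = x k / w k" by auto
    have cge: "x j / w j \<le> c" if "j \<in> -J" for j unfolding c_def using that by (intro Max_ge) auto
    have cpos: "c > 0" using k x wp by (simp add: pos_vec_def)
    have xk: "x k = c * w k" using k wp[of k] by simp
    have "faceinf f (-J) (\<lambda>j. ereal (x j)) k = EXT x k" using k by (simp add: faceinf_apply EXT_def)
    also have "\<dots> \<le> EXT (\<lambda>j. c * w j) k"
      by (rule EXTmono) (use cge wp in \<open>auto simp: pos_divide_le_eq\<close>)
    also have "\<dots> = ereal c * EXT w k" by (rule EXThom[OF w cpos])
    also have "\<dots> = ereal (c * h w k)" using EXTh[OF w, of k] k by simp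
    also have "\<dots> \<le> ereal (b * x k)" using hLb[of k] k cpos xk by (simp add: mult_left_mono)
    finally have "faceinf f (-J) (\<lambda>j. ereal (x j)) k / ereal (x k) \<le> ereal b"
      using x by (intro ereal_div_le) (auto simp: pos_vec_def)
    moreover have "(MIN i. faceinf f (-J) (\<lambda>j. ereal (x j)) i / ereal (x i)) \<le> faceinf f (-J) (\<lambda>j. ereal (x j)) k / ereal (x k)"
      by (rule Min_le) auto
    ultimately show "(MIN i. faceinf f (-J) (\<lambda>j. ereal (x j)) i / ereal (x i)) \<le> ereal b"
      by (rule order_trans[rotated])
  qed
  have "r0 (face0 f J) < ereal b" using gap stepB by simp
  then obtain rho where rho: "r0 (face0 f J) < ereal rho" "ereal rho < ereal b"
    using ereal_dense2 by blast
  obtain y where y: "pos_vec y" "ereal (MAX i. face0 f J y i / y i) < ereal rho"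
    using rho(1) unfolding r0_def by (subst (asm) INF_less_iff) auto
  have yp: "y i > 0" for i using y by (simp add: pos_vec_def)
  have yj: "ext0 f (P0 J y) j < rho * y j" if "j \<in> J" for j
  proof -
    have "face0 f J y j / y j \<le> (MAX i. face0 f J y i / y i)" by (rule Max_ge) auto
    hence "face0 f J y j / y j < rho" using y(2) by simp
    thus ?thesis using that yp[of j] by (simp add: face0_apply pos_divide_less_eq)
  qed
  have "\<forall>j\<in>J. \<exists>e>0. f (\<lambda>k. P0 J y k + e) j < rho * y j"
    using yj ext0_less[OF P0_nonneg[OF y(1)]] by blast
  then obtain Ee where Ee: "\<And>j. j \<in> J \<Longrightarrow> Ee j > 0 \<and> f (\<lambda>k. P0 J y k + Ee j) j < rho * y j"
    by metis
  define ee where "ee = Min (Ee ` J)"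
  have "ee \<in> Ee ` J" unfolding ee_def using Jne by (intro Min_in) auto
  hence eepos: "ee > 0" using Ee by auto
  have eele: "ee \<le> Ee j" if "j \<in> J" for j unfolding ee_def using that by (intro Min_le) auto
  have fee: "f (\<lambda>k. P0 J y k + ee) j < rho * y j" if "j \<in> J" for j
  proof -
    have "f (\<lambda>k. P0 J y k + ee) j \<le> f (\<lambda>k. P0 J y k + Ee j) j"
      using eele[OF that] eepos Ee[OF that] by (intro f_mono pos_shift P0_nonneg y(1)) auto
    thus ?thesis using Ee[OF that] by simp
  qed
  define \<eta> where "\<eta> = (b - a) / (2 * a)"
  have eta: "\<eta> > 0" "(1 + \<eta>) * a = (a + b) / 2" using ab by (auto simp: \<eta>_def field_simps)
  define S where "S = (\<Sum>k\<in>UNIV. w k)"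
  have wS: "w k \<le> S" for k unfolding S_def by (rule member_le_sum) (use wp in \<open>auto simp: less_imp_le\<close>)
  have Spos: "S > 0" using wS[of k1] wp[of k1] by linarith
  define s where "s = ee / (2 * S)"
  have spos: "s > 0" using eepos Spos by (simp add: s_def)
  have sw: "s * w k \<le> ee / 2" for k
  proof -
    have "s * w k \<le> s * S" using wS[of k] spos by simp
    also have "\<dots> = ee / 2" using Spos by (simp add: s_def)
    finally show ?thesis .
  qed
  define m where "m = Min (range w)"
  have "m \<in> range w" unfolding m_def by (rule Min_in) auto
  hence mpos: "m > 0" using wp by auto
  have mle: "m \<le> w k" for k unfolding m_def by (rule Min_le) auto
  define e' where "e' = \<eta> * s * m"
  have e'pos: "e' > 0" using eta spos mpos by (simp add: e'_def)
  have e'le: "e' \<le> \<eta> * s * w k" for k using mle[of k] eta spos by (simp add: e'_def)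
  define x where "x i = (if i \<in> J then y i else if i \<in> I then s * w i else 1)" for i
  have xpos: "pos_vec x" using yp spos wp by (auto simp: x_def pos_vec_def)
  have xp: "x i > 0" for i using xpos by (simp add: pos_vec_def)
  have P0x: "nonneg_vec (P0 I x)" by (rule P0_nonneg[OF xpos])
  have r0I: "r0 (face0 f I) \<le> ereal (max rho ((a + b) / 2))"
  proof (rule r0_le[OF xpos])
    fix i show "face0 f I x i / x i \<le> max rho ((a + b) / 2)"
    proof (cases "i \<in> J")
      case iJ: True
      have iI: "i \<in> I" using iJ I by auto
      have "ext0 f (P0 I x) i \<le> f (\<lambda>k. P0 I x k + ee / 2) i" by (rule ext0_le[OF P0x]) (use eepos in simp)
      also have "\<dots> \<le> f (\<lambda>k. P0 J y k + ee) i"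
      proof (rule f_mono)
        show "pos_vec (\<lambda>k. P0 I x k + ee / 2)" using P0x eepos by (intro pos_shift) auto
        show "pos_vec (\<lambda>k. P0 J y k + ee)" using eepos by (intro pos_shift P0_nonneg y(1))
        show "\<forall>j. P0 I x j + ee / 2 \<le> P0 J y j + ee"
        proof
          fix j show "P0 I x j + ee / 2 \<le> P0 J y j + ee"
            using sw[of j] eepos I by (auto simp: P0_def x_def)
        qed
      qed
      also have "\<dots> < rho * x i" using fee[OF iJ] iJ by (simp add: x_def)
      finally have "face0 f I x i / x i < rho" using iI xp[of i] by (simp add: face0_apply pos_divide_less_eq)
      thus ?thesis by simp
    next
      case iJ: False
      show ?thesis
      proof (cases "i \<in> I")
        case iI: True
        define u where "u k = P0 I x k + e'" for k
        have upos: "pos_vec u" unfolding u_def using P0x e'pos by (intro pos_shift) auto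
        have tw: "pos_vec (\<lambda>k. ((1 + \<eta>) * s) * w k)" using eta spos wp by (simp add: pos_vec_def)
        have uX: "\<forall>j. ereal (u j) \<le> Pinf (-J) (\<lambda>k. ereal (((1 + \<eta>) * s) * w k)) j"
        proof
          fix j
          have 1: "s * w j + e' \<le> (1 + \<eta>) * s * w j" using e'le[of j] by (simp add: algebra_simps)
          have 2: "e' \<le> (1 + \<eta>) * s * w j" using 1 spos wp[of j] by (smt (verit) mult_pos_pos)
          show "ereal (u j) \<le> Pinf (-J) (\<lambda>k. ereal (((1 + \<eta>) * s) * w k)) j"
            using 1 2 I by (auto simp: u_def P0_def x_def Pinf_def)
        qed
        have "ext0 f (P0 I x) i \<le> f u i" unfolding u_def by (rule ext0_le[OF P0x e'pos])
        hence "ereal (ext0 f (P0 I x) i) \<le> ereal (f u i)" by simp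
        also have "\<dots> \<le> EXT (\<lambda>k. ((1 + \<eta>) * s) * w k) i"
          unfolding EXT_def by (rule extinf_ge[OF upos uX])
        also have "\<dots> = ereal ((1 + \<eta>) * s) * EXT w i" by (rule EXThom[OF w]) (use eta spos in simp)
        also have "\<dots> = ereal ((1 + \<eta>) * s * (a * w i))" using EXTh[OF w iJ] hK[OF iI iJ] by simp
        also have "\<dots> = ereal ((a + b) / 2 * x i)"
        proof -
          have "(1 + \<eta>) * s * (a * w i) = ((1 + \<eta>) * a) * (s * w i)" by (simp add: algebra_simps)
          thus ?thesis using eta(2) iI iJ by (simp add: x_def)
        qed
        finally have "face0 f I x i \<le> (a + b) / 2 * x i" using iI by (simp add: face0_apply)
        hence "face0 f I x i / x i \<le> (a + b) / 2" using xp[of i] by (simp add: pos_divide_le_eq)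
        thus ?thesis by (rule order_trans) simp
      next
        case False thus ?thesis using ab by (simp add: face0_apply le_max_iff_disj)
      qed
    qed
  qed
  have "ereal (max rho ((a + b) / 2)) < ereal b" using rho(2) ab by simp
  hence "r0 (face0 f I) < ereal b" using r0I by (rule order_le_less_trans[rotated])
  thus ?thesis using stepA by (meson order_less_le_trans)
qed

end

theorem theorem3p4:
  fixes f :: "('n::finite \<Rightarrow> real) \<Rightarrow> ('n \<Rightarrow> real)"
    and J :: "'n set"
  assumes fpos: "\<And>x. pos_vec x \<Longrightarrow> pos_vec (f x)"
    and fmono: "order_preserving_pos f"
    and fhom: "homogeneous_pos f"
    and Jne: "J \<noteq> {}" and Jproper: "J \<noteq> UNIV"
    and gap: "r0 (face0 f J) < lambdainf (faceinf f (- J))"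
  shows "(eigvecs0 (face0 f J) J \<noteq> {} \<and> dH_bounded0 J (eigvecs0 (face0 f J) J)
            \<longrightarrow> (\<forall>I. I \<noteq> {} \<and> I \<subseteq> J \<longrightarrow> r0 (face0 f I) < lambdainf (faceinf f (- I))))
       \<and> (eigvecsinf (faceinf f (- J)) (- J) \<noteq> {}
            \<and> dH_boundedinf (- J) (eigvecsinf (faceinf f (- J)) (- J))
            \<longrightarrow> (\<forall>I. J \<subseteq> I \<and> I \<noteq> UNIV \<longrightarrow> r0 (face0 f I) < lambdainf (faceinf f (- I))))"
proof -
  interpret fctx f by unfold_locales (use fpos fmono fhom in auto)
  show ?thesis using part1[OF Jproper gap] part2[OF Jne gap] by blast
qed

end
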